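(* Let $Q$ be an indefinite irrational ternary quadratic form with $\det Q=1$. Then there are at most four rational isotropic lines through the origin, and at most four rational degenerate planes through the origin.
   Context: A quadratic form is rational if it is proportional to a form with rational coefficients, and irrational otherwise. A line through the origin is rational if it is spanned by a vector of $\mathbb{Z}^3$, and isotropic if $Q$ vanishes on a nonzero vector of it. A plane through the origin is rational if spanned by vectors of $\mathbb{Z}^3$, and degenerate if the restriction of $Q$ to it is the square of a linear form. *)

theory Defs
  imports "HOL-Analysis.Analysis"
begin

definition qf :: "real^3^3 \<Rightarrow> real^3 \<Rightarrow> real" where
  "qf A x = x \<bullet> (A *v x)"

definition rational_form :: "real^3^3 \<Rightarrow> bool" where
  "rational_form A \<longleftrightarrow> (\<exists>c::real. c \<noteq> 0 \<and> (\<forall>i j. c * A$i$j \<in> \<rat>))"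

definition indefinite_form :: "real^3^3 \<Rightarrow> bool" where
  "indefinite_form A \<longleftrightarrow> (\<exists>x. qf A x > 0) \<and> (\<exists>y. qf A y < 0)"

definition integral_vec :: "real^3 \<Rightarrow> bool" where
  "integral_vec v \<longleftrightarrow> (\<forall>i. v$i \<in> \<int>)"

definition rational_line :: "(real^3) set \<Rightarrow> bool" where
  "rational_line L \<longleftrightarrow> (\<exists>v. integral_vec v \<and> v \<noteq> 0 \<and> L = span {v})"

definition isotropic_line :: "real^3^3 \<Rightarrow> (real^3) set \<Rightarrow> bool" where
  "isotropic_line A L \<longleftrightarrow> (\<exists>v\<in>L. v \<noteq> 0 \<and> qf A v = 0)"

definition rational_plane :: "(real^3) set \<Rightarrow> bool" where
  "rational_plane P \<longleftrightarrow> subspace P \<and> dim P = 2 \<and>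
     (\<exists>S. (\<forall>v\<in>S. integral_vec v) \<and> P = span S)"

definition degenerate_plane :: "real^3^3 \<Rightarrow> (real^3) set \<Rightarrow> bool" where
  "degenerate_plane A P \<longleftrightarrow>
     (\<exists>(c::real) (l::real^3 \<Rightarrow> real). linear l \<and> (\<forall>x\<in>P. qf A x = c * (l x)^2))"

end

theory Submission
  imports Defs
begin

unbundle cross3_syntax

definition bf :: "real^3^3 \<Rightarrow> real^3 \<Rightarrow> real^3 \<Rightarrow> real" where
  "bf A x y = x \<bullet> (A *v y)"

lemma decomp:
  fixes x y z u :: "real^3"
  shows "(x \<bullet> (y \<times> z)) *\<^sub>R u = ((y \<times> z) \<bullet> u) *\<^sub>R x + ((z \<times> x) \<bullet> u) *\<^sub>R y + ((x \<times> y) \<bullet> u) *\<^sub>R z"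
  apply (simp only: vec_eq_iff forall_3 inner_vec_def sum_3 cross_components vector_add_component vector_scaleR_component inner_real_def real_scaleR_def)
  apply (intro conjI; algebra)
  done

lemma bf_sym: assumes "transpose A = A" shows "bf A x y = bf A y x"
proof -
  have "x v* A = A *v x" using assms transpose_matrix_vector by metis
  then show ?thesis unfolding bf_def by (metis dot_lmul_matrix inner_commute)
qed

lemma bf_lin:
  "bf A (x + y) z = bf A x z + bf A y z"
  "bf A z (x + y) = bf A z x + bf A z y"
  "bf A (c *\<^sub>R x) z = c * bf A x z"
  "bf A z (c *\<^sub>R x) = c * bf A z x"
  unfolding bf_def by (simp_all add: inner_add_left inner_add_right matrix_vector_right_distrib matrix_vector_mult_scaleR)

lemma gram_entry: "(M ** A ** transpose M)$i$j = bf A (M$i) (M$j)"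
  unfolding bf_def matrix_matrix_mult_def transpose_def inner_vec_def matrix_vector_mult_def
  apply (simp only: vec_lambda_beta sum_3 inner_real_def)
  apply algebra
  done

lemma gram_det: "det (M ** A ** transpose M) = det M ^ 2 * det A"
  by (simp add: det_mul det_transpose power2_eq_square)

lemma triple_cyc: fixes a b c :: "real^3" shows "a \<bullet> (b \<times> c) = (a \<times> b) \<bullet> c"
  by (simp add: cross3_simps)

lemma triple_cyc2: fixes a b c :: "real^3" shows "a \<bullet> (b \<times> c) = c \<bullet> (a \<times> b)"
  by (simp add: cross3_simps)

lemma qf_bf: "qf A x = bf A x x" by (simp add: qf_def bf_def)

lemma no_coplanar:
  fixes x y z :: "real^3"
  assumes sym: "transpose A = A" and dA: "det A \<noteq> 0"
    and qx: "bf A x x = 0" and qy: "bf A y y = 0" and qz: "bf A z z = 0"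
    and nxy: "x \<times> y \<noteq> 0" and nxz: "x \<times> z \<noteq> 0" and nyz: "y \<times> z \<noteq> 0"
  shows "x \<bullet> (y \<times> z) \<noteq> 0"
proof
  assume t: "x \<bullet> (y \<times> z) = 0"
  define u where "u = y \<times> z"
  define e where "e = y \<bullet> (z \<times> u)"
  have e: "e = u \<bullet> u" unfolding e_def u_def by (simp add: triple_cyc2)
  have e0: "e \<noteq> 0" using nyz unfolding e u_def by simp
  define \<alpha> where "\<alpha> = (z \<times> u) \<bullet> x"
  define \<beta> where "\<beta> = (u \<times> y) \<bullet> x"
  have dec: "e *\<^sub>R x = \<alpha> *\<^sub>R y + \<beta> *\<^sub>R z"
    using decomp[of y z u x] t unfolding e_def \<alpha>_def \<beta>_def u_def
    by (simp add: inner_commute)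
  have a0: "\<alpha> \<noteq> 0"
  proof
    assume "\<alpha> = 0"
    then have "(e *\<^sub>R x) \<times> z = 0" using dec by (simp add: cross_mult_left)
    then show False using e0 nxz by (simp add: cross_mult_left)
  qed
  have b0: "\<beta> \<noteq> 0"
  proof
    assume "\<beta> = 0"
    then have "(e *\<^sub>R x) \<times> y = 0" using dec by (simp add: cross_mult_left)
    then show False using e0 nxy by (simp add: cross_mult_left)
  qed
  have "bf A (e *\<^sub>R x) (e *\<^sub>R x) = 2 * \<alpha> * \<beta> * bf A y z"
    unfolding dec using qy qz bf_sym[OF sym, of z y] by (simp add: bf_lin algebra_simps)
  then have byz: "bf A y z = 0" using qx a0 b0 by (simp add: bf_lin)
  define M :: "real^3^3" where "M = vector [y, z, u]"
  have "det M = e" unfolding M_def e_def by (simp add: dot_cross_det)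
  then have "det (M ** A ** transpose M) \<noteq> 0" using e0 dA by (simp add: gram_det)
  moreover have "det (M ** A ** transpose M) = 0"
    unfolding det_3 gram_entry unfolding M_def using qy qz byz bf_sym[OF sym, of z y] by simp
  ultimately show False by simp
qed


lemma int_inner: "integral_vec a \<Longrightarrow> integral_vec b \<Longrightarrow> a \<bullet> b \<in> \<int>"
  unfolding integral_vec_def inner_vec_def sum_3 inner_real_def by (simp add: Ints_add Ints_mult)

lemma int_cross: "integral_vec a \<Longrightarrow> integral_vec b \<Longrightarrow> integral_vec (a \<times> b)"
  unfolding integral_vec_def forall_3 cross_components by (simp add: Ints_diff Ints_mult)

lemma identK:
  fixes v1 v2 v3 v4 v5 :: "real^3"
  shows "(v1 \<bullet> (v2 \<times> v3)) * (v1 \<bullet> (v4 \<times> v5)) =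
     ((v3 \<times> v1) \<bullet> v4) * ((v1 \<times> v2) \<bullet> v5) - ((v1 \<times> v2) \<bullet> v4) * ((v3 \<times> v1) \<bullet> v5)"
  apply (simp only: inner_vec_def sum_3 cross_components inner_real_def)
  apply algebra
  done

lemma bf_axis: "bf A (axis i 1) (axis j 1) = A$i$j"
  by (simp add: bf_def matrix_vector_mult_basis inner_axis' column_def)

lemma cross_ne_swap: "x \<times> y \<noteq> 0 \<Longrightarrow> y \<times> x \<noteq> 0"
  by (metis cross_skew neg_0_equal_iff_equal)

lemma solve2:
  fixes x1 x2 x3 a1 a2 a3 b1 b2 b3 :: real
  assumes "a1*x1 + a2*x2 + a3*x3 = 0" "b1*x1 + b2*x2 + b3*x3 = 0"
  shows "(a1*b2 - a2*b1) * x1 = (a2*b3 - a3*b2) * x3"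
    "(a1*b2 - a2*b1) * x2 = (a3*b1 - a1*b3) * x3"
proof -
  have "(a1*b2 - a2*b1) * x1 - (a2*b3 - a3*b2) * x3 = b2*(a1*x1 + a2*x2 + a3*x3) - a2*(b1*x1 + b2*x2 + b3*x3)"
    by algebra
  then show "(a1*b2 - a2*b1) * x1 = (a2*b3 - a3*b2) * x3" using assms by simp
  have "(a1*b2 - a2*b1) * x2 - (a3*b1 - a1*b3) * x3 = a1*(b1*x1 + b2*x2 + b3*x3) - b1*(a1*x1 + a2*x2 + a3*x3)"
    by algebra
  then show "(a1*b2 - a2*b1) * x2 = (a3*b1 - a1*b3) * x3" using assms by simp
qed

lemma expand3:
  assumes sym: "transpose A = A" and "bf A v1 v1 = 0" "bf A v2 v2 = 0" "bf A v3 v3 = 0"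
  shows "bf A (p1 *\<^sub>R v1 + p2 *\<^sub>R v2 + p3 *\<^sub>R v3) (q1 *\<^sub>R v1 + q2 *\<^sub>R v2 + q3 *\<^sub>R v3)
    = (p1*q2 + p2*q1) * bf A v1 v2 + (p1*q3 + p3*q1) * bf A v1 v3 + (p2*q3 + p3*q2) * bf A v2 v3"
  using assms bf_sym[OF sym, of v2 v1] bf_sym[OF sym, of v3 v1] bf_sym[OF sym, of v3 v2]
  by (simp add: bf_lin algebra_simps)

lemma core:
  fixes v1 v2 v3 v4 v5 :: "real^3"
  assumes sym: "transpose A = A" and dA: "det A \<noteq> 0"
    and i1: "integral_vec v1" and i2: "integral_vec v2" and i3: "integral_vec v3"
    and i4: "integral_vec v4" and i5: "integral_vec v5"
    and q1: "bf A v1 v1 = 0" and q2: "bf A v2 v2 = 0" and q3: "bf A v3 v3 = 0"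
    and q4: "bf A v4 v4 = 0" and q5: "bf A v5 v5 = 0"
    and n12: "v1 \<times> v2 \<noteq> 0" and n13: "v1 \<times> v3 \<noteq> 0" and n14: "v1 \<times> v4 \<noteq> 0" and n15: "v1 \<times> v5 \<noteq> 0"
    and n23: "v2 \<times> v3 \<noteq> 0" and n24: "v2 \<times> v4 \<noteq> 0" and n25: "v2 \<times> v5 \<noteq> 0"
    and n34: "v3 \<times> v4 \<noteq> 0" and n35: "v3 \<times> v5 \<noteq> 0" and n45: "v4 \<times> v5 \<noteq> 0"
  shows "rational_form A"
proof -
  note nc = no_coplanar[OF sym dA]
  define d where "d = v1 \<bullet> (v2 \<times> v3)"
  have d0: "d \<noteq> 0" unfolding d_def using nc[OF q1 q2 q3 n12 n13 n23] .
  define w1 where "w1 = v2 \<times> v3"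
  define w2 where "w2 = v3 \<times> v1"
  define w3 where "w3 = v1 \<times> v2"
  have iw1: "integral_vec w1" and iw2: "integral_vec w2" and iw3: "integral_vec w3"
    unfolding w1_def w2_def w3_def using int_cross i1 i2 i3 by auto
  define P1 where "P1 = w1 \<bullet> v4"
  define P2 where "P2 = w2 \<bullet> v4"
  define P3 where "P3 = w3 \<bullet> v4"
  define R1 where "R1 = w1 \<bullet> v5"
  define R2 where "R2 = w2 \<bullet> v5"
  define R3 where "R3 = w3 \<bullet> v5"
  have P10: "P1 \<noteq> 0" unfolding P1_def w1_def using nc[OF q2 q3 q4 n23 n24 n34] by (simp add: triple_cyc)
  have P20: "P2 \<noteq> 0" unfolding P2_def w2_def
    using nc[OF q3 q1 q4 cross_ne_swap[OF n13] n34 n14] by (simp add: triple_cyc)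
  have P30: "P3 \<noteq> 0" unfolding P3_def w3_def using nc[OF q1 q2 q4 n12 n14 n24] by (simp add: triple_cyc)
  have R10: "R1 \<noteq> 0" unfolding R1_def w1_def using nc[OF q2 q3 q5 n23 n25 n35] by (simp add: triple_cyc)
  have R20: "R2 \<noteq> 0" unfolding R2_def w2_def
    using nc[OF q3 q1 q5 cross_ne_swap[OF n13] n35 n15] by (simp add: triple_cyc)
  have R30: "R3 \<noteq> 0" unfolding R3_def w3_def using nc[OF q1 q2 q5 n12 n15 n25] by (simp add: triple_cyc)
  have K0: "P2 * R3 - P3 * R2 \<noteq> 0"
  proof -
    have "d * (v1 \<bullet> (v4 \<times> v5)) = P2 * R3 - P3 * R2"
      unfolding d_def P2_def P3_def R2_def R3_def w2_def w3_def by (rule identK)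
    moreover have "v1 \<bullet> (v4 \<times> v5) \<noteq> 0" using nc[OF q1 q4 q5 n14 n15 n45] .
    ultimately show ?thesis using d0 by (metis mult_eq_0_iff)
  qed
  have dec4: "d *\<^sub>R v4 = P1 *\<^sub>R v1 + P2 *\<^sub>R v2 + P3 *\<^sub>R v3"
    unfolding d_def P1_def P2_def P3_def w1_def w2_def w3_def by (rule decomp)
  have dec5: "d *\<^sub>R v5 = R1 *\<^sub>R v1 + R2 *\<^sub>R v2 + R3 *\<^sub>R v3"
    unfolding d_def R1_def R2_def R3_def w1_def w2_def w3_def by (rule decomp)
  define b12 where "b12 = bf A v1 v2"
  define b13 where "b13 = bf A v1 v3"
  define b23 where "b23 = bf A v2 v3"
  have E4: "(P1*P2) * b12 + (P1*P3) * b13 + (P2*P3) * b23 = 0"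
  proof -
    have "bf A (d *\<^sub>R v4) (d *\<^sub>R v4) = 0" using q4 by (simp add: bf_lin)
    then have "(P1*P2 + P2*P1) * b12 + (P1*P3 + P3*P1) * b13 + (P2*P3 + P3*P2) * b23 = 0"
      unfolding dec4 expand3[OF sym q1 q2 q3] b12_def b13_def b23_def .
    then show ?thesis by (simp add: algebra_simps)
  qed
  have E5: "(R1*R2) * b12 + (R1*R3) * b13 + (R2*R3) * b23 = 0"
  proof -
    have "bf A (d *\<^sub>R v5) (d *\<^sub>R v5) = 0" using q5 by (simp add: bf_lin)
    then have "(R1*R2 + R2*R1) * b12 + (R1*R3 + R3*R1) * b13 + (R2*R3 + R3*R2) * b23 = 0"
      unfolding dec5 expand3[OF sym q1 q2 q3] b12_def b13_def b23_def .
    then show ?thesis by (simp add: algebra_simps)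
  qed
  define c1 where "c1 = (P1*P3)*(R2*R3) - (P2*P3)*(R1*R3)"
  define c2 where "c2 = (P2*P3)*(R1*R2) - (P1*P2)*(R2*R3)"
  define c3 where "c3 = (P1*P2)*(R1*R3) - (P1*P3)*(R1*R2)"
  have c3e: "c3 = P1 * R1 * (P2 * R3 - P3 * R2)" unfolding c3_def by algebra
  have c30: "c3 \<noteq> 0" unfolding c3e using P10 R10 K0 by simp
  have s1: "c3 * b12 = c1 * b23" and s2: "c3 * b13 = c2 * b23"
    using solve2[OF E4 E5] unfolding c1_def c2_def c3_def by auto
  define lam where "lam = b23 / c3"
  have b12e: "b12 = lam * c1" unfolding lam_def using s1 c30 by (simp add: field_simps)
  have b13e: "b13 = lam * c2" unfolding lam_def using s2 c30 by (simp add: field_simps)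
  have b23e: "b23 = lam * c3" unfolding lam_def using c30 by simp
  have l0: "lam \<noteq> 0"
  proof
    assume l: "lam = 0"
    define M :: "real^3^3" where "M = vector [v1, v2, v3]"
    have "det M = d" unfolding M_def d_def by (simp add: dot_cross_det)
    then have "det (M ** A ** transpose M) \<noteq> 0" using d0 dA by (simp add: gram_det)
    moreover have "det (M ** A ** transpose M) = 0"
      unfolding det_3 gram_entry unfolding M_def
      using q1 q2 q3 b12e b13e b23e l bf_sym[OF sym, of v2 v1] bf_sym[OF sym, of v3 v1] bf_sym[OF sym, of v3 v2]
      unfolding b12_def b13_def b23_def by simp
    ultimately show False by simp
  qed
  have Pint: "P1 \<in> \<int>" "P2 \<in> \<int>" "P3 \<in> \<int>" "R1 \<in> \<int>" "R2 \<in> \<int>" "R3 \<in> \<int>"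
    unfolding P1_def P2_def P3_def R1_def R2_def R3_def using int_inner iw1 iw2 iw3 i4 i5 by auto
  have crat: "c1 \<in> \<rat>" "c2 \<in> \<rat>" "c3 \<in> \<rat>"
    unfolding c1_def c2_def c3_def using Pint Ints_subset_Rats by (auto intro!: Rats_diff Rats_mult)
  have entry: "d^2 * A$i$j = lam * ((w1$i * w2$j + w2$i * w1$j) * c1 + (w1$i * w3$j + w3$i * w1$j) * c2
      + (w2$i * w3$j + w3$i * w2$j) * c3)" for i j
  proof -
    have ax: "d *\<^sub>R axis k 1 = (w1$k) *\<^sub>R v1 + (w2$k) *\<^sub>R v2 + (w3$k) *\<^sub>R v3" for k
      using decomp[of v1 v2 v3 "axis k 1"] unfolding d_def w1_def w2_def w3_def by (simp add: inner_axis)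
    have "d^2 * A$i$j = bf A (d *\<^sub>R axis i 1) (d *\<^sub>R axis j 1)"
      by (simp add: bf_lin bf_axis power2_eq_square)
    also have "\<dots> = (w1$i * w2$j + w2$i * w1$j) * b12 + (w1$i * w3$j + w3$i * w1$j) * b13
      + (w2$i * w3$j + w3$i * w2$j) * b23"
      unfolding ax expand3[OF sym q1 q2 q3] b12_def b13_def b23_def ..
    finally show ?thesis unfolding b12e b13e b23e by (simp add: algebra_simps)
  qed
  have wr: "w1$i \<in> \<rat>" "w2$i \<in> \<rat>" "w3$i \<in> \<rat>" for i
    using iw1 iw2 iw3 Ints_subset_Rats unfolding integral_vec_def by auto
  show ?thesis unfolding rational_form_def
  proof (intro exI conjI allI)
    show "d^2 / lam \<noteq> 0" using d0 l0 by simp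
    fix i j
    have "d^2 / lam * A$i$j = (w1$i * w2$j + w2$i * w1$j) * c1 + (w1$i * w3$j + w3$i * w1$j) * c2
      + (w2$i * w3$j + w3$i * w2$j) * c3"
      using entry[of i j] l0 by (simp add: field_simps)
    also have "\<dots> \<in> \<rat>" using wr crat by (intro Rats_add Rats_mult) auto
    finally show "d^2 / lam * A$i$j \<in> \<rat>" .
  qed
qed


lemma get5: "finite T \<Longrightarrow> card T = 5 \<Longrightarrow> \<exists>a b c d e. T = {a,b,c,d,e} \<and> distinct [a,b,c,d,e]"
  by (simp add: numeral_eq_Suc card_Suc_eq) fastforce

lemma line_vec:
  assumes "rational_line L" "isotropic_line A L"
  shows "\<exists>v. integral_vec v \<and> v \<noteq> 0 \<and> L = span {v} \<and> bf A v v = 0"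
proof -
  obtain v where v: "integral_vec v" "v \<noteq> 0" "L = span {v}" using assms(1) unfolding rational_line_def by blast
  obtain u where u: "u \<in> L" "u \<noteq> 0" "qf A u = 0" using assms(2) unfolding isotropic_line_def by blast
  obtain c where c: "u = c *\<^sub>R v" using u(1) v(3) span_singleton by blast
  have "c \<noteq> 0" using u(2) c by auto
  then have "bf A v v = 0" using u(3) c by (simp add: qf_bf bf_lin)
  then show ?thesis using v by blast
qed

lemma span_eq_cross:
  fixes v w :: "real^3"
  assumes "v \<noteq> 0" "w \<noteq> 0" "v \<times> w = 0"
  shows "span {v} = span {w}"
proof -
  obtain c where c: "w = c *\<^sub>R v" using assms collinear_lemma cross_eq_0 by metis
  then have "c \<noteq> 0" using assms(2) by auto
  have "v = inverse c *\<^sub>R w" using c \<open>c \<noteq> 0\<close> by simp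
  moreover have "inverse c *\<^sub>R w \<in> span {w}" by (rule span_mul) (simp add: span_base)
  moreover have "c *\<^sub>R v \<in> span {v}" by (rule span_mul) (simp add: span_base)
  ultimately show ?thesis unfolding span_eq using c by simp
qed

lemma lines_bound:
  assumes sym: "transpose A = A" and dA: "det A \<noteq> 0" and nr: "\<not> rational_form A"
  shows "finite {L. rational_line L \<and> isotropic_line A L} \<and> card {L. rational_line L \<and> isotropic_line A L} \<le> 4"
proof (rule ccontr)
  let ?S = "{L. rational_line L \<and> isotropic_line A L}"
  assume H: "\<not> (finite ?S \<and> card ?S \<le> 4)"
  have "\<exists>T. T \<subseteq> ?S \<and> finite T \<and> card T = 5"
  proof (cases "finite ?S")
    case True
    then have "5 \<le> card ?S" using H by simp
    then show ?thesis by (meson obtain_subset_with_card_n)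
  next
    case False
    show ?thesis using infinite_arbitrarily_large[OF False, of 5] by blast
  qed
  then obtain T where T: "T \<subseteq> ?S" "finite T" "card T = 5" by blast
  from get5[OF T(2) T(3)] obtain L1 L2 L3 L4 L5 where L: "T = {L1,L2,L3,L4,L5}" "distinct [L1,L2,L3,L4,L5]"
    by blast
  have "\<forall>L\<in>T. \<exists>v. integral_vec v \<and> v \<noteq> 0 \<and> L = span {v} \<and> bf A v v = 0"
  proof
    fix L assume "L \<in> T"
    then have "rational_line L" "isotropic_line A L" using T(1) by auto
    then show "\<exists>v. integral_vec v \<and> v \<noteq> 0 \<and> L = span {v} \<and> bf A v v = 0" by (rule line_vec)
  qed
  from bchoice[OF this] obtain f where f0: "\<forall>L\<in>T. integral_vec (f L) \<and> f L \<noteq> 0 \<and> L = span {f L} \<and> bf A (f L) (f L) = 0"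
    by (elim exE)
  have f: "integral_vec (f L) \<and> f L \<noteq> 0 \<and> L = span {f L} \<and> bf A (f L) (f L) = 0" if "L \<in> T" for L
    using f0 that by (rule bspec)
  have nz: "f L \<times> f L' \<noteq> 0" if "L \<in> T" "L' \<in> T" "L \<noteq> L'" for L L'
  proof
    assume "f L \<times> f L' = 0"
    then have "span {f L} = span {f L'}" using f[OF that(1)] f[OF that(2)] span_eq_cross by blast
    then show False using f[OF that(1)] f[OF that(2)] that(3) by simp
  qed
  have inT: "L1 \<in> T" "L2 \<in> T" "L3 \<in> T" "L4 \<in> T" "L5 \<in> T" using L(1) by auto
  have d: "L1 \<noteq> L2" "L1 \<noteq> L3" "L1 \<noteq> L4" "L1 \<noteq> L5" "L2 \<noteq> L3" "L2 \<noteq> L4" "L2 \<noteq> L5"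
     "L3 \<noteq> L4" "L3 \<noteq> L5" "L4 \<noteq> L5" using L(2) by auto
  have a1: "integral_vec (f L1)" "bf A (f L1) (f L1) = 0" using f[OF inT(1)] by auto
  have a2: "integral_vec (f L2)" "bf A (f L2) (f L2) = 0" using f[OF inT(2)] by auto
  have a3: "integral_vec (f L3)" "bf A (f L3) (f L3) = 0" using f[OF inT(3)] by auto
  have a4: "integral_vec (f L4)" "bf A (f L4) (f L4) = 0" using f[OF inT(4)] by auto
  have a5: "integral_vec (f L5)" "bf A (f L5) (f L5) = 0" using f[OF inT(5)] by auto
  have "rational_form A"
    by (rule core[OF sym dA a1(1) a2(1) a3(1) a4(1) a5(1) a1(2) a2(2) a3(2) a4(2) a5(2)
       nz[OF inT(1) inT(2) d(1)] nz[OF inT(1) inT(3) d(2)] nz[OF inT(1) inT(4) d(3)] nz[OF inT(1) inT(5) d(4)]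
       nz[OF inT(2) inT(3) d(5)] nz[OF inT(2) inT(4) d(6)] nz[OF inT(2) inT(5) d(7)]
       nz[OF inT(3) inT(4) d(8)] nz[OF inT(3) inT(5) d(9)] nz[OF inT(4) inT(5) d(10)]])
  then show False using nr by simp
qed


definition adj3 :: "real^3^3 \<Rightarrow> real^3^3" where
  "adj3 A = transpose (vector [A$2 \<times> A$3, A$3 \<times> A$1, A$1 \<times> A$2])"


lemma adj3_right: "A ** adj3 A = det A *\<^sub>R mat 1"
  unfolding adj3_def vec_eq_iff forall_3
  apply (simp only: matrix_matrix_mult_def sum_3 transpose_def vec_lambda_beta vector_3 cross_components det_3 mat_def vector_scaleR_component)
  apply simp
  apply (intro conjI; algebra)
  done

lemma adj3_sym:
  assumes "transpose A = A" shows "transpose (adj3 A) = adj3 A"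
proof -
  have s: "A$i$j = A$j$i" for i j
  proof -
    have "transpose A $ j $ i = A $ j $ i" using assms by simp
    then show ?thesis by (simp add: transpose_def)
  qed
  show ?thesis unfolding adj3_def vec_eq_iff forall_3
    apply (simp only: transpose_def vec_lambda_beta vector_3 cross_components)
    by (simp add: s[of 2 1] s[of 3 1] s[of 3 2] mult.commute)
qed

definition rat_vec :: "real^3 \<Rightarrow> bool" where "rat_vec v \<longleftrightarrow> (\<forall>i. v$i \<in> \<rat>)"

lemma rat_cross: "rat_vec a \<Longrightarrow> rat_vec b \<Longrightarrow> rat_vec (a \<times> b)"
  unfolding rat_vec_def forall_3 cross_components by simp

lemma adj3_rat:
  assumes "\<forall>i j. c * B$i$j \<in> \<rat>" shows "c^2 * adj3 B $i$j \<in> \<rat>"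
proof -
  have r: "rat_vec (c *\<^sub>R B$k)" for k using assms unfolding rat_vec_def by simp
  have e: "c^2 * (a \<times> b)$i = ((c *\<^sub>R a) \<times> (c *\<^sub>R b))$i" for a b :: "real^3"
    by (simp add: cross_mult_left cross_mult_right power2_eq_square)
  have "c^2 * adj3 B $i$j = ((c *\<^sub>R (vector [B$2, B$3, B$1] :: real^3^3)$j) \<times> (c *\<^sub>R (vector [B$3, B$1, B$2] :: real^3^3)$j))$i"
    unfolding adj3_def transpose_def using exhaust_3[of j] by (auto simp: e)
  also have "\<dots> \<in> \<rat>" using rat_cross r exhaust_3[of j] unfolding rat_vec_def by auto
  finally show ?thesis .
qed


lemma plane_normal:
  assumes "rational_plane P"
  shows "\<exists>s1 s2. integral_vec s1 \<and> integral_vec s2 \<and> s1 \<times> s2 \<noteq> 0 \<and> P = span {s1, s2}"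
proof -
  obtain S where S: "\<forall>v\<in>S. integral_vec v" "P = span S" and d2: "dim P = 2"
    using assms unfolding rational_plane_def by blast
  obtain B where B: "B \<subseteq> S" "independent B" "S \<subseteq> span B" "card B = dim S" by (rule basis_exists)
  have "dim S = 2" using d2 S(2) by simp
  then have "card B = 2" using B(4) by simp
  then obtain s1 s2 where s: "B = {s1,s2}" "s1 \<noteq> s2" unfolding card_2_iff by blast
  have PB: "P = span {s1,s2}" unfolding S(2) s(1)[symmetric] span_eq using B(1,3) span_superset by blast
  have nz: "s1 \<times> s2 \<noteq> 0"
  proof
    assume "s1 \<times> s2 = 0"
    then have "collinear {0, s1, s2}" by (simp add: cross_eq_0)
    then have "s1 = 0 \<or> s2 = 0 \<or> (\<exists>c. s2 = c *\<^sub>R s1)" by (simp add: collinear_lemma)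
    moreover have "s1 \<noteq> 0" "s2 \<noteq> 0" using B(2) s(1) dependent_zero by auto
    ultimately obtain c where c: "s2 = c *\<^sub>R s1" by blast
    have "s2 \<in> span ({s1,s2} - {s2})" using c s(2) by (simp add: span_mul span_base)
    then have "dependent {s1,s2}" unfolding dependent_def by blast
    then show False using B(2) s(1) by simp
  qed
  show ?thesis using S(1) B(1) s(1) nz PB by auto
qed

lemma plane_eq:
  fixes s1 s2 :: "real^3"
  assumes nz: "s1 \<times> s2 \<noteq> 0"
  shows "span {s1, s2} = {x. (s1 \<times> s2) \<bullet> x = 0}"
proof
  show "span {s1, s2} \<subseteq> {x. (s1 \<times> s2) \<bullet> x = 0}"
    by (rule span_minimal) (auto simp: subspace_hyperplane dot_cross_self)
next
  show "{x. (s1 \<times> s2) \<bullet> x = 0} \<subseteq> span {s1, s2}"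
  proof
    fix x assume x: "x \<in> {x. (s1 \<times> s2) \<bullet> x = 0}"
    let ?n = "s1 \<times> s2"
    have e: "s1 \<bullet> (s2 \<times> ?n) = ?n \<bullet> ?n" by (simp add: triple_cyc2)
    have e0: "?n \<bullet> ?n \<noteq> 0" using nz by simp
    have "(?n \<bullet> ?n) *\<^sub>R x = ((s2 \<times> ?n) \<bullet> x) *\<^sub>R s1 + ((?n \<times> s1) \<bullet> x) *\<^sub>R s2"
      using decomp[of s1 s2 ?n x] x e by simp
    then have "x = inverse (?n \<bullet> ?n) *\<^sub>R (((s2 \<times> ?n) \<bullet> x) *\<^sub>R s1 + ((?n \<times> s1) \<bullet> x) *\<^sub>R s2)"
      using e0 by (metis scaleR_scaleR left_inverse scaleR_one)
    also have "\<dots> \<in> span {s1, s2}" by (intro span_mul span_add) (simp_all add: span_base)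
    finally show "x \<in> span {s1, s2}" .
  qed
qed

lemma perp_line:
  fixes s1 s2 :: "real^3"
  assumes nz: "s1 \<times> s2 \<noteq> 0"
  shows "{y. \<forall>x\<in>span {s1, s2}. y \<bullet> x = 0} = span {s1 \<times> s2}"
proof
  show "{y. \<forall>x\<in>span {s1, s2}. y \<bullet> x = 0} \<subseteq> span {s1 \<times> s2}"
  proof
    fix y assume y: "y \<in> {y. \<forall>x\<in>span {s1, s2}. y \<bullet> x = 0}"
    then have "y \<bullet> s1 = 0" "y \<bullet> s2 = 0" by (auto simp: span_base)
    then have "y \<times> (s1 \<times> s2) = 0" by (simp add: Lagrange)
    then have "(s1 \<times> s2) \<times> y = 0" by (subst cross_skew) simp
    then have "collinear {0, s1 \<times> s2, y}" by (simp add: cross_eq_0)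
    then have "y = 0 \<or> (\<exists>c. y = c *\<^sub>R (s1 \<times> s2))" using nz by (simp add: collinear_lemma)
    then show "y \<in> span {s1 \<times> s2}" by (auto simp: span_mul span_base span_zero)
  qed
next
  show "span {s1 \<times> s2} \<subseteq> {y. \<forall>x\<in>span {s1, s2}. y \<bullet> x = 0}"
  proof
    fix y assume "y \<in> span {s1 \<times> s2}"
    then obtain c where c: "y = c *\<^sub>R (s1 \<times> s2)" using span_singleton by blast
    show "y \<in> {y. \<forall>x\<in>span {s1, s2}. y \<bullet> x = 0}" using plane_eq[OF nz] c by auto
  qed
qed


lemma bf_diff:
  "bf A (x - y) z = bf A x z - bf A y z"
  "bf A z (x - y) = bf A z x - bf A z y"
  unfolding bf_def by (simp_all add: inner_diff_left inner_diff_right matrix_vector_mult_diff_distrib)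

lemma qf_diff4:
  assumes sym: "transpose A = A"
  shows "bf A (w + y) (w + y) - bf A (w - y) (w - y) = 4 * bf A w y"
proof -
  show ?thesis using bf_sym[OF sym, of y w] by (simp add: bf_lin bf_diff algebra_simps)
qed

lemma degen_iso:
  fixes s1 s2 :: "real^3"
  assumes sym: "transpose A = A" and inv: "adj3 A ** A = mat 1" and nz: "s1 \<times> s2 \<noteq> 0"
    and dg: "degenerate_plane A (span {s1, s2})"
  shows "bf (adj3 A) (s1 \<times> s2) (s1 \<times> s2) = 0"
proof -
  let ?P = "span {s1, s2}"
  let ?n = "s1 \<times> s2"
  obtain c l where l: "linear l" and ql: "\<forall>x\<in>?P. qf A x = c * (l x)^2"
    using dg unfolding degenerate_plane_def by blast
  have s1P: "s1 \<in> ?P" and s2P: "s2 \<in> ?P" by (simp_all add: span_base)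
  have s10: "s1 \<noteq> 0" using nz by auto
  obtain w where w: "w \<in> ?P" "w \<noteq> 0" "l w = 0"
  proof (cases "l s1 = 0")
    case True
    then show ?thesis using that s1P s10 by blast
  next
    case False
    define w where "w = l s2 *\<^sub>R s1 - l s1 *\<^sub>R s2"
    have "w \<in> ?P" unfolding w_def by (intro span_diff span_mul s1P s2P)
    moreover have "l w = 0" unfolding w_def using l by (simp add: linear_diff linear_scale)
    moreover have "w \<noteq> 0"
    proof
      assume "w = 0"
      then have "w \<times> s1 = 0" by simp
      moreover have "w \<times> s1 = l s1 *\<^sub>R ?n" unfolding w_def
        by (simp add: Cross3.left_diff_distrib cross_mult_left) (metis cross_skew scaleR_minus_right)
      ultimately show False using False nz by simp
    qed
    ultimately show ?thesis using that by blast
  qed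
  have orth: "bf A w y = 0" if y: "y \<in> ?P" for y
  proof -
    have "w + y \<in> ?P" "w - y \<in> ?P" using w(1) y by (simp_all add: span_add span_diff)
    moreover have "l (w + y) = l y" "l (w - y) = - l y" using l w(3) by (simp_all add: linear_add linear_diff)
    ultimately have "bf A (w + y) (w + y) = bf A (w - y) (w - y)" using ql by (simp add: qf_bf)
    then show ?thesis using qf_diff4[OF sym, of w y] by simp
  qed
  define z where "z = A *v w"
  have zs: "z \<bullet> s1 = 0" "z \<bullet> s2 = 0"
    using orth[OF s1P] orth[OF s2P] bf_sym[OF sym, of w s1] bf_sym[OF sym, of w s2]
    unfolding z_def bf_def by (simp_all add: inner_commute)
  have "z \<times> ?n = 0" using zs by (simp add: Lagrange)
  then have "?n \<times> z = 0" by (subst cross_skew) simp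
  then have "collinear {0, ?n, z}" by (simp add: cross_eq_0)
  then have zc: "z = 0 \<or> (\<exists>\<mu>. z = \<mu> *\<^sub>R ?n)" using nz by (simp add: collinear_lemma)
  have wz: "adj3 A *v z = w" unfolding z_def by (simp add: matrix_vector_mul_assoc inv)
  obtain \<mu> where mu: "z = \<mu> *\<^sub>R ?n" using zc wz w(2) by auto
  have "w = \<mu> *\<^sub>R (adj3 A *v ?n)" using wz mu by (simp add: matrix_vector_mult_scaleR)
  moreover have "?n \<bullet> w = 0" using w(1) plane_eq[OF nz] by auto
  moreover have "\<mu> \<noteq> 0" using mu wz w(2) by auto
  ultimately show ?thesis unfolding bf_def by simp
qed


theorem lemma2p2:
  fixes A :: "real^3^3"
  assumes "transpose A = A"
    and "indefinite_form A"
    and "\<not> rational_form A"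
    and "det A = 1"
  shows "finite {L. rational_line L \<and> isotropic_line A L}
         \<and> card {L. rational_line L \<and> isotropic_line A L} \<le> 4
         \<and> finite {P. rational_plane P \<and> degenerate_plane A P}
         \<and> card {P. rational_plane P \<and> degenerate_plane A P} \<le> 4"
proof -
  note sym = assms(1) and nr = assms(3) and d1 = assms(4)
  have part1: "finite {L. rational_line L \<and> isotropic_line A L}
         \<and> card {L. rational_line L \<and> isotropic_line A L} \<le> 4"
    using lines_bound[OF sym _ nr] d1 by simp
  define B where "B = adj3 A"
  have AB: "A ** B = mat 1" unfolding B_def using adj3_right[of A] d1 by simp
  then have BA: "B ** A = mat 1" by (simp add: matrix_left_right_inverse)
  have symB: "transpose B = B" unfolding B_def by (rule adj3_sym[OF sym])
  have dB: "det B = 1" using arg_cong[OF AB, of det] d1 by (simp add: det_mul)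
  have BB: "B ** adj3 B = mat 1" using adj3_right[of B] dB by simp
  have adjB: "adj3 B = A"
  proof -
    have "adj3 B = (A ** B) ** adj3 B" using AB by simp
    also have "\<dots> = A" using BB by (simp add: matrix_mul_assoc[symmetric])
    finally show ?thesis .
  qed
  have nrB: "\<not> rational_form B"
  proof
    assume "rational_form B"
    then obtain c where c: "c \<noteq> 0" "\<forall>i j. c * B$i$j \<in> \<rat>" unfolding rational_form_def by blast
    have "c^2 * A$i$j \<in> \<rat>" for i j using adj3_rat[OF c(2), of i j] adjB by simp
    then have "rational_form A" unfolding rational_form_def using c(1) by (intro exI[of _ "c^2"]) simp
    then show False using nr by simp
  qed
  have lb: "finite {L. rational_line L \<and> isotropic_line B L} \<and> card {L. rational_line L \<and> isotropic_line B L} \<le> 4"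
    using lines_bound[OF symB _ nrB] dB by simp
  let ?S2 = "{P. rational_plane P \<and> degenerate_plane A P}"
  let ?S1 = "{L. rational_line L \<and> isotropic_line B L}"
  define g where "g P = {y. \<forall>x\<in>P. y \<bullet> x = 0}" for P :: "(real^3) set"
  define h where "h Y = {x. \<forall>y\<in>Y. y \<bullet> x = (0::real)}" for Y :: "(real^3) set"
  have key: "g P \<in> ?S1 \<and> h (g P) = P" if P: "P \<in> ?S2" for P
  proof -
    obtain s1 s2 where s: "integral_vec s1" "integral_vec s2" "s1 \<times> s2 \<noteq> 0" "P = span {s1, s2}"
      using plane_normal P by blast
    let ?n = "s1 \<times> s2"
    have gP: "g P = span {?n}" unfolding g_def s(4) by (rule perp_line[OF s(3)])
    have iso: "bf B ?n ?n = 0" unfolding B_def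
      by (rule degen_iso[OF sym _ s(3)]) (use BA P s(4) B_def in auto)
    have "rational_line (g P)" unfolding gP rational_line_def using int_cross[OF s(1) s(2)] s(3) by blast
    moreover have "isotropic_line B (g P)" unfolding gP isotropic_line_def using s(3) iso
      by (intro bexI[of _ ?n]) (auto simp: qf_bf span_base)
    moreover have "h (g P) = P"
    proof
      show "h (g P) \<subseteq> P" unfolding h_def gP unfolding s(4) plane_eq[OF s(3)] by (auto simp: span_base)
      show "P \<subseteq> h (g P)" unfolding h_def gP unfolding s(4) plane_eq[OF s(3)]
        by (auto simp: span_singleton)
    qed
    ultimately show ?thesis by simp
  qed
  have sub: "g ` ?S2 \<subseteq> ?S1" using key by blast
  have inj: "inj_on g ?S2" unfolding inj_on_def using key by metis
  have fin: "finite ?S2" using finite_imageD[OF finite_subset[OF sub] inj] lb by blast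
  have "card ?S2 = card (g ` ?S2)" using card_image[OF inj] by simp
  also have "\<dots> \<le> card ?S1" using card_mono[OF _ sub] lb by blast
  also have "\<dots> \<le> 4" using lb by blast
  finally show ?thesis using part1 fin by blast
qed

end
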